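(* Let $\gamma>1$, $\alpha>\frac12$, $\theta\in(0,\frac12)$, $\epsilon>0$ and $\bar\rho>0$. Let $(\rho,u)$ be a smooth solution with $\rho>0$ of the regularized system $\rho_t+(\rho u)_x=0$, $(\rho u)_t+(\rho u^2+\rho^\gamma)_x=((\rho^\alpha+\epsilon\rho^\theta)u_x)_x$ on $\mathbb R\times[0,T]$ satisfying the estimate of Lemma 3.3. Then there exist a constant $C$ independent of $\epsilon$ and $T$, and a constant $C(\epsilon,T)>0$, such that $$0<C(\epsilon,T)\le\rho(x,t)\le C\quad\text{on }\mathbb R\times[0,T].$$
   Context: $\Psi(\rho,\bar\rho)=\int_{\bar\rho}^{\rho}\frac{s^\gamma-\bar\rho^\gamma}{s^2}ds$. The estimate of Lemma 3.3: $\sup_t\int\{\rho u^2+[(\rho^{\alpha-1/2}/(\alpha-1/2))_x]^2+\epsilon^2[(\rho^{\theta-1/2}/(\theta-1/2))_x]^2+\rho\Psi(\rho,\bar\rho)\}dx+\int_0^T\int\{(\rho^\alpha+\epsilon\rho^\theta)u_x^2+[(\rho^{(\alpha+\gamma-1)/2}-\bar\rho^{(\alpha+\gamma-1)/2})_x]^2+\epsilon[(\rho^{(\theta+\gamma-1)/2}-\bar\rho^{(\theta+\gamma-1)/2})_x]^2\}dxdt\le C$ with $C$ independent of $\epsilon,T$. *)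

theory Defs
  imports "HOL-Analysis.Analysis"
begin

text \<open>C^k regularity of a real function of (x,t) on a set S, via partial derivatives
  (derivatives taken within S, so regularity up to the boundary t = 0, t = T).\<close>
fun Ck_on :: "nat \<Rightarrow> (real \<times> real) set \<Rightarrow> (real \<times> real \<Rightarrow> real) \<Rightarrow> bool" where
  "Ck_on 0 S f = continuous_on S f"
| "Ck_on (Suc k) S f =
     (\<exists>fx ft. (\<forall>z\<in>S. (f has_derivative (\<lambda>h. fx z * fst h + ft z * snd h)) (at z within S))
              \<and> Ck_on k S fx \<and> Ck_on k S ft)"

definition smooth_on :: "(real \<times> real) set \<Rightarrow> (real \<Rightarrow> real \<Rightarrow> real) \<Rightarrow> bool" where
  "smooth_on S f \<longleftrightarrow> (\<forall>k. Ck_on k S (\<lambda>(x, t). f x t))"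

definition dx :: "(real \<Rightarrow> real \<Rightarrow> real) \<Rightarrow> real \<Rightarrow> real \<Rightarrow> real" where
  "dx f x t = deriv (\<lambda>y. f y t) x"

definition dt :: "(real \<Rightarrow> real \<Rightarrow> real) \<Rightarrow> real \<Rightarrow> real \<Rightarrow> real" where
  "dt f x t = deriv (\<lambda>s. f x s) t"

definition Psi :: "real \<Rightarrow> real \<Rightarrow> real \<Rightarrow> real" where
  "Psi \<gamma> r rb =
     (if rb \<le> r then integral {rb..r} (\<lambda>s. (s powr \<gamma> - rb powr \<gamma>) / s\<^sup>2)
      else - integral {r..rb} (\<lambda>s. (s powr \<gamma> - rb powr \<gamma>) / s\<^sup>2))"

definition solves_system ::
  "real \<Rightarrow> real \<Rightarrow> real \<Rightarrow> real \<Rightarrow> real \<Rightarrow> (real \<Rightarrow> real \<Rightarrow> real) \<Rightarrow> (real \<Rightarrow> real \<Rightarrow> real) \<Rightarrow> bool" where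
  "solves_system \<gamma> \<alpha> \<theta> \<epsilon> T \<rho> u \<longleftrightarrow>
     (\<forall>x t. 0 < t \<and> t < T \<longrightarrow>
        dt \<rho> x t + dx (\<lambda>x t. \<rho> x t * u x t) x t = 0
      \<and> dt (\<lambda>x t. \<rho> x t * u x t) x t
          + dx (\<lambda>x t. \<rho> x t * (u x t)\<^sup>2 + \<rho> x t powr \<gamma>) x t
        = dx (\<lambda>x t. (\<rho> x t powr \<alpha> + \<epsilon> * \<rho> x t powr \<theta>) * dx u x t) x t)"

definition lemma33_estimate ::
  "real \<Rightarrow> real \<Rightarrow> real \<Rightarrow> real \<Rightarrow> real \<Rightarrow> real \<Rightarrow> real \<Rightarrow> (real \<Rightarrow> real \<Rightarrow> real) \<Rightarrow> (real \<Rightarrow> real \<Rightarrow> real) \<Rightarrow> bool" where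
  "lemma33_estimate \<gamma> \<alpha> \<theta> \<rho>b C0 \<epsilon> T \<rho> u \<longleftrightarrow>
     (\<forall>t\<in>{0..T}.
        (\<integral>\<^sup>+ x. ennreal (\<rho> x t * (u x t)\<^sup>2
            + (dx (\<lambda>x t. \<rho> x t powr (\<alpha> - 1/2) / (\<alpha> - 1/2)) x t)\<^sup>2
            + \<epsilon>\<^sup>2 * (dx (\<lambda>x t. \<rho> x t powr (\<theta> - 1/2) / (\<theta> - 1/2)) x t)\<^sup>2
            + \<rho> x t * Psi \<gamma> (\<rho> x t) \<rho>b) \<partial>lborel) \<le> ennreal C0)
   \<and> (\<integral>\<^sup>+ t. indicator {0..T} t *
        (\<integral>\<^sup>+ x. ennreal ((\<rho> x t powr \<alpha> + \<epsilon> * \<rho> x t powr \<theta>) * (dx u x t)\<^sup>2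
            + (dx (\<lambda>x t. \<rho> x t powr ((\<alpha> + \<gamma> - 1)/2) - \<rho>b powr ((\<alpha> + \<gamma> - 1)/2)) x t)\<^sup>2
            + \<epsilon> * (dx (\<lambda>x t. \<rho> x t powr ((\<theta> + \<gamma> - 1)/2) - \<rho>b powr ((\<theta> + \<gamma> - 1)/2)) x t)\<^sup>2)
          \<partial>lborel) \<partial>lborel) \<le> ennreal C0"

end

theory Submission imports Defs begin


lemma key:
  fixes f f' h :: "real \<Rightarrow> real" and A m c x0 :: real
  assumes der: "\<And>x. (f has_real_derivative f' x) (at x)" and cf: "continuous_on UNIV f'"
    and IA: "(\<integral>\<^sup>+x. ennreal ((f' x)\<^sup>2) \<partial>lborel) \<le> ennreal A"
    and IH: "(\<integral>\<^sup>+x. ennreal (h x) \<partial>lborel) \<le> ennreal A"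
    and A0: "A \<ge> 0" and m0: "m > 0" and thr: "\<And>y. f y > c \<Longrightarrow> m \<le> h y"
  shows "f x0 \<le> c + (A + (A/m+1))/2"
proof (rule ccontr)
  define L where "L = A/m + 1"
  have L0: "L > 0" using A0 m0 unfolding L_def by (smt (verit) divide_nonneg_pos)
  assume big: "\<not> f x0 \<le> c + (A + (A/m+1))/2"
  have "\<exists>y\<in>{x0..x0+L}. f y \<le> c"
  proof (rule ccontr)
    assume "\<not> ?thesis"
    then have all: "\<And>y. y \<in> {x0..x0+L} \<Longrightarrow> m \<le> h y" using thr by force
    have "(\<integral>\<^sup>+x. ennreal m * indicator {x0..x0+L} x \<partial>lborel) \<le> (\<integral>\<^sup>+x. ennreal (h x) \<partial>lborel)"
      by (rule nn_integral_mono) (auto simp: indicator_def all ennreal_leI)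
    also have "\<dots> \<le> ennreal A" by (rule IH)
    finally have "ennreal m * ennreal L \<le> ennreal A"
      using L0 by (simp add: nn_integral_cmult_indicator)
    then have "ennreal (m * L) \<le> ennreal A" using m0 L0 by (simp add: ennreal_mult)
    then have "m * L \<le> A" using A0 by (simp add: ennreal_le_iff)
    moreover have "m * L = A + m" using m0 unfolding L_def by (simp add: field_simps)
    ultimately show False using m0 by simp
  qed
  then obtain y where y: "x0 \<le> y" "y \<le> x0 + L" "f y \<le> c" by auto
  have ftc: "(f' has_integral (f y - f x0)) {x0..y}"
    apply (rule fundamental_theorem_of_calculus[OF y(1)])
    using der by (simp add: has_real_derivative_iff_has_vector_derivative[symmetric] has_field_derivative_at_within)
  have cf2: "continuous_on {x0..y} (\<lambda>x. ((f' x)\<^sup>2 + 1)/2)"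
    by (intro continuous_intros continuous_on_subset[OF cf]) auto
  have i2: "(\<lambda>x. ((f' x)\<^sup>2 + 1)/2) integrable_on {x0..y}"
    by (rule integrable_continuous_interval[OF cf2])
  have cf3: "continuous_on {x0..y} (\<lambda>x. (f' x)\<^sup>2)"
    by (intro continuous_intros continuous_on_subset[OF cf]) auto
  have i3: "(\<lambda>x. (f' x)\<^sup>2) integrable_on {x0..y}"
    by (rule integrable_continuous_interval[OF cf3])
  have "ennreal (integral {x0..y} (\<lambda>x. (f' x)\<^sup>2)) = (\<integral>\<^sup>+x. indicator {x0..y} x * (f' x)\<^sup>2 \<partial>lborel)"
    by (rule nn_integral_has_integral_lebesgue[symmetric]) (use i3 in auto)
  also have "\<dots> \<le> (\<integral>\<^sup>+x. ennreal ((f' x)\<^sup>2) \<partial>lborel)"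
    by (rule nn_integral_mono) (auto simp: indicator_def)
  also have "\<dots> \<le> ennreal A" by (rule IA)
  finally have I3: "integral {x0..y} (\<lambda>x. (f' x)\<^sup>2) \<le> A" using A0 by (simp add: ennreal_le_iff)
  have "f x0 - f y = integral {x0..y} (\<lambda>x. - f' x)"
    using ftc by (simp add: integral_neg has_integral_integrable_integral[symmetric] integrable_integral integral_unique)
  also have "\<dots> \<le> integral {x0..y} (\<lambda>x. ((f' x)\<^sup>2 + 1)/2)"
  proof (rule integral_le)
    show "(\<lambda>x. - f' x) integrable_on {x0..y}" using ftc integrable_neg by blast
    show "(\<lambda>x. ((f' x)\<^sup>2 + 1)/2) integrable_on {x0..y}" by (rule i2)
    fix x have "0 \<le> (f' x + 1)\<^sup>2" by simp
    then show "- f' x \<le> ((f' x)\<^sup>2 + 1)/2" by (simp add: power2_eq_square algebra_simps)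
  qed
  also have "\<dots> = (integral {x0..y} (\<lambda>x. (f' x)\<^sup>2) + (y - x0))/2"
  proof -
    have "integral {x0..y} (\<lambda>x. (f' x)\<^sup>2 + 1) = integral {x0..y} (\<lambda>x. (f' x)\<^sup>2) + integral {x0..y} (\<lambda>x. 1)"
      by (rule integral_add[OF i3]) auto
    then show ?thesis using y(1) by (simp add: integral_divide)
  qed
  also have "\<dots> \<le> (A + L)/2" using I3 y by simp
  finally show False using big y(3) unfolding L_def by linarith
qed



lemma g_cont: "0 < r \<Longrightarrow> continuous_on {r..R} (\<lambda>s::real. (s powr \<gamma> - rb powr \<gamma>) / s\<^sup>2)"
  by (intro continuous_intros) auto

lemma Psi_nonneg:
  assumes "r > 0" "rb > 0" "\<gamma> \<ge> 0"
  shows "Psi \<gamma> r rb \<ge> 0"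
proof (cases "rb \<le> r")
  case True
  have "0 \<le> integral {rb..r} (\<lambda>s. (s powr \<gamma> - rb powr \<gamma>) / s\<^sup>2)"
    apply (rule integral_nonneg)
    apply (rule integrable_continuous_interval[OF g_cont]) using assms apply simp
    using assms True by (auto intro!: divide_nonneg_pos powr_mono2 simp: power2_eq_square)
  then show ?thesis using True by (simp add: Psi_def)
next
  case False
  have I: "(\<lambda>s. (s powr \<gamma> - rb powr \<gamma>) / s\<^sup>2) integrable_on {r..rb}"
    by (rule integrable_continuous_interval[OF g_cont]) (use assms in simp)
  have "0 \<le> integral {r..rb} (\<lambda>s. - ((s powr \<gamma> - rb powr \<gamma>) / s\<^sup>2))"
    apply (rule integral_nonneg)
    apply (rule integrable_neg[OF I])
    using assms False by (auto intro!: divide_nonpos_pos powr_mono2 simp: power2_eq_square)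
  then show ?thesis using False I by (simp add: Psi_def integral_neg)
qed

lemma Psi_big:
  assumes "rb > 0" "\<gamma> > 0" "r \<ge> 3 * rb"
  shows "Psi \<gamma> r rb \<ge> rb * ((2*rb) powr \<gamma> - rb powr \<gamma>) / (9 * rb\<^sup>2)"
proof -
  let ?g = "\<lambda>s. (s powr \<gamma> - rb powr \<gamma>) / s\<^sup>2"
  have int: "?g integrable_on {rb..r}" by (rule integrable_continuous_interval[OF g_cont]) (use assms in simp)
  have int2: "?g integrable_on {2*rb..3*rb}" by (rule integrable_continuous_interval[OF g_cont]) (use assms in simp)
  have "integral {2*rb..3*rb} (\<lambda>s. ((2*rb) powr \<gamma> - rb powr \<gamma>) / (9 * rb\<^sup>2)) \<le> integral {2*rb..3*rb} ?g"
  proof (rule integral_le)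
    show "(\<lambda>s. ((2*rb) powr \<gamma> - rb powr \<gamma>) / (9 * rb\<^sup>2)) integrable_on {2*rb..3*rb}" by (rule integrable_const_ivl)
    show "?g integrable_on {2*rb..3*rb}" by (rule int2)
    fix s assume s: "s \<in> {2*rb..3*rb}"
    have n: "0 \<le> (2*rb) powr \<gamma> - rb powr \<gamma>" using assms by (auto intro!: powr_mono2)
    have "(2*rb) powr \<gamma> - rb powr \<gamma> \<le> s powr \<gamma> - rb powr \<gamma>" using assms s by (auto intro!: powr_mono2)
    moreover have "s\<^sup>2 \<le> 9 * rb\<^sup>2"
    proof -
      have "s\<^sup>2 \<le> (3*rb)\<^sup>2" using s assms by (intro power_mono) auto
      then show ?thesis by (simp add: power_mult_distrib)
    qed
    moreover have "s\<^sup>2 > 0" using s assms by auto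
    ultimately show "((2*rb) powr \<gamma> - rb powr \<gamma>) / (9 * rb\<^sup>2) \<le> ?g s"
      using n by (intro frac_le) auto
  qed
  also have "\<dots> \<le> integral {rb..r} ?g"
    apply (rule integral_subset_le)
    using assms apply auto[1]
    apply (rule int2) apply (rule int)
    using assms by (auto intro!: divide_nonneg_pos powr_mono2 simp: power2_eq_square)
  finally show ?thesis using assms by (simp add: Psi_def)
qed

lemma Psi_small:
  assumes "rb > 0" "\<gamma> > 0" "0 < r" "r \<le> rb / 4"
  shows "r * Psi \<gamma> r rb \<ge> (rb powr \<gamma> - (rb/2) powr \<gamma>) / 2"
proof -
  let ?g = "\<lambda>s. (s powr \<gamma> - rb powr \<gamma>) / s\<^sup>2"
  define k where "k = rb powr \<gamma> - (rb/2) powr \<gamma>"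
  have k0: "k \<ge> 0" unfolding k_def using assms by (auto intro!: powr_mono2)
  have int: "(\<lambda>s. - ?g s) integrable_on {r..rb}"
    by (rule integrable_neg, rule integrable_continuous_interval[OF g_cont]) (use assms in simp)
  have int2: "(\<lambda>s. - ?g s) integrable_on {r..rb/2}"
    by (rule integrable_neg, rule integrable_continuous_interval[OF g_cont]) (use assms in simp)
  have hi: "((\<lambda>s. k / s\<^sup>2) has_integral ((- k / (rb/2)) - (- k / r))) {r..rb/2}"
  proof (rule fundamental_theorem_of_calculus)
    show "r \<le> rb/2" using assms by simp
    fix s assume s: "s \<in> {r..rb/2}"
    then have "s > 0" using assms by auto
    then have "((\<lambda>s. - k / s) has_real_derivative k / s\<^sup>2) (at s within {r..rb/2})"
      by (auto intro!: derivative_eq_intros simp: power2_eq_square field_simps)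
    then show "((\<lambda>s. - k / s) has_vector_derivative k / s\<^sup>2) (at s within {r..rb/2})"
      by (simp add: has_real_derivative_iff_has_vector_derivative)
  qed
  have "k * (1/r - 2/rb) = integral {r..rb/2} (\<lambda>s. k / s\<^sup>2)"
    using hi by (simp add: integral_unique field_simps)
  also have "\<dots> \<le> integral {r..rb/2} (\<lambda>s. - ?g s)"
  proof (rule integral_le)
    show "(\<lambda>s. k / s\<^sup>2) integrable_on {r..rb/2}" using hi by blast
    show "(\<lambda>s. - ?g s) integrable_on {r..rb/2}" by (rule int2)
    fix s assume s: "s \<in> {r..rb/2}"
    then have s0: "s > 0" using assms by auto
    have "s powr \<gamma> \<le> (rb/2) powr \<gamma>" using s s0 assms by (auto intro!: powr_mono2)
    then have "k \<le> rb powr \<gamma> - s powr \<gamma>" unfolding k_def by simp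
    then have "k / s\<^sup>2 \<le> (rb powr \<gamma> - s powr \<gamma>) / s\<^sup>2" using s0 by (simp add: divide_right_mono)
    also have "\<dots> = - ?g s" by (metis minus_diff_eq minus_divide_left)
    finally show "k / s\<^sup>2 \<le> - ?g s" .
  qed
  also have "\<dots> \<le> integral {r..rb} (\<lambda>s. - ?g s)"
    apply (rule integral_subset_le)
    using assms apply auto[1]
    apply (rule int2) apply (rule int)
    using assms by (auto intro!: divide_nonpos_pos powr_mono2 simp: power2_eq_square)
  also have "\<dots> = Psi \<gamma> r rb"
  proof -
    have I: "?g integrable_on {r..rb}" by (rule integrable_continuous_interval[OF g_cont]) (use assms in simp)
    show ?thesis using assms I by (simp add: Psi_def integral_neg)
  qed
  finally have P: "k * (1/r - 2/rb) \<le> Psi \<gamma> r rb" .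
  have "k / 2 \<le> k * (1 - 2*r/rb)"
  proof -
    have "1/2 \<le> 1 - 2*r/rb" using assms by (simp add: field_simps)
    then show ?thesis using k0 by (metis mult_left_mono mult.commute times_divide_eq_right mult_1 divide_inverse)
  qed
  also have "\<dots> = r * (k * (1/r - 2/rb))" using assms by (simp add: field_simps)
  also have "\<dots> \<le> r * Psi \<gamma> r rb" using P assms by (simp add: mult_left_mono)
  finally show ?thesis unfolding k_def .
qed



lemma smooth_slice:
  assumes sm: "smooth_on (UNIV \<times> {0..T}) \<rho>" and t: "t \<in> {0..T}"
  shows "\<exists>r'. (\<forall>y. ((\<lambda>y. \<rho> y t) has_real_derivative r' y) (at y)) \<and> continuous_on UNIV r'"
proof -
  let ?S = "UNIV \<times> {0..T} :: (real \<times> real) set"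
  have "Ck_on (Suc 0) ?S (\<lambda>(x, t). \<rho> x t)" using sm unfolding smooth_on_def by blast
  then obtain fx ft where d: "\<forall>z\<in>?S. ((\<lambda>(x, t). \<rho> x t) has_derivative (\<lambda>h. fx z * fst h + ft z * snd h)) (at z within ?S)"
    and c: "continuous_on ?S fx" by auto
  have d': "\<And>z. z\<in>?S \<Longrightarrow> ((\<lambda>(x, t). \<rho> x t) has_derivative (\<lambda>h. fx z * fst h + ft z * snd h)) (at z within ?S)"
    using d by blast
  have "((\<lambda>y. \<rho> y t) has_real_derivative fx (y, t)) (at y)" for y
  proof -
    have l: "((\<lambda>y::real. (y, t)) has_derivative (\<lambda>h. (h, 0))) (at y within UNIV)"
      by (auto intro!: derivative_eq_intros)
    have "((\<lambda>y. (\<lambda>(x, t). \<rho> x t) (y, t)) has_derivative (\<lambda>h. fx (y,t) * fst (h, 0::real) + ft (y,t) * snd (h, 0::real))) (at y within UNIV)"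
      by (rule has_derivative_in_compose2[OF d' _ _ l]) (use t in auto)
    then have "((\<lambda>y. \<rho> y t) has_derivative (\<lambda>h. fx (y, t) * h)) (at y)"
      by (simp add: mult.commute)
    then show ?thesis by (simp add: has_field_derivative_def)
  qed
  moreover have "continuous_on UNIV (\<lambda>y. fx (y, t))"
    by (rule continuous_on_compose2[OF c]) (use t in \<open>auto intro!: continuous_intros\<close>)
  ultimately show ?thesis by (intro exI[of _ "\<lambda>y. fx (y, t)"]) auto
qed

lemma powr_der:
  fixes r r' :: "real \<Rightarrow> real"
  assumes pos: "\<And>y. r y > 0" and d: "\<And>y. (r has_real_derivative r' y) (at y)" and p: "p \<noteq> 0"
  shows "((\<lambda>y. r y powr p / p) has_real_derivative r y powr (p - 1) * r' y) (at y)"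
proof -
  have "((\<lambda>y. r y powr p) has_real_derivative p * r y powr (p - of_nat 1) * r' y) (at y)"
    by (rule DERIV_fun_powr[OF d pos])
  then have "((\<lambda>y. r y powr p / p) has_real_derivative p * r y powr (p - of_nat 1) * r' y / p) (at y)"
    by (rule DERIV_cdivide)
  then show ?thesis using p by simp
qed

lemma powr_der_cont:
  fixes r r' :: "real \<Rightarrow> real"
  assumes pos: "\<And>y. r y > 0" and d: "\<And>y. (r has_real_derivative r' y) (at y)" and c: "continuous_on UNIV r'"
  shows "continuous_on UNIV (\<lambda>y. r y powr (p - 1) * r' y)"
proof -
  have "continuous_on UNIV r" using d
    by (meson DERIV_isCont continuous_at_imp_continuous_on)
  then show ?thesis using pos c by (auto intro!: continuous_intros simp: less_imp_neq[symmetric])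
qed



definition Cup :: "real \<Rightarrow> real \<Rightarrow> real \<Rightarrow> real \<Rightarrow> real" where
  "Cup \<gamma> \<alpha> \<rho>b C0 = (let a = \<alpha> - 1/2; A = max C0 0;
      mU = 3*\<rho>b * (\<rho>b * ((2*\<rho>b) powr \<gamma> - \<rho>b powr \<gamma>) / (9*\<rho>b\<^sup>2))
    in (a * ((3*\<rho>b) powr a / a + (A + (A/mU+1))/2)) powr (1/a))"

definition clow :: "real \<Rightarrow> real \<Rightarrow> real \<Rightarrow> real \<Rightarrow> real \<Rightarrow> real" where
  "clow \<gamma> \<theta> \<rho>b C0 \<epsilon> = (let p = \<theta> - 1/2; A = max C0 0;
      mL = (\<rho>b powr \<gamma> - (\<rho>b/2) powr \<gamma>)/2;
      KL = - (\<epsilon> * ((\<rho>b/4) powr p / p)) + (A + (A/mL+1))/2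
    in ((-p) * KL / \<epsilon>) powr (1/p))"

lemma slice_bounds:
  fixes r r' W :: "real \<Rightarrow> real"
  assumes g1: "\<gamma> > 1" and a1: "\<alpha> > 1/2" and th0: "0 < \<theta>" and th1: "\<theta> < 1/2" and rb: "\<rho>b > 0" and e0: "\<epsilon> > 0"
    and pos: "\<And>y. r y > 0" and d: "\<And>y. (r has_real_derivative r' y) (at y)" and c: "continuous_on UNIV r'"
    and W0: "\<And>x. W x \<ge> 0"
    and est: "(\<integral>\<^sup>+x. ennreal (W x + (deriv (\<lambda>y. r y powr (\<alpha> - 1/2) / (\<alpha> - 1/2)) x)\<^sup>2
         + \<epsilon>\<^sup>2 * (deriv (\<lambda>y. r y powr (\<theta> - 1/2) / (\<theta> - 1/2)) x)\<^sup>2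
         + r x * Psi \<gamma> (r x) \<rho>b) \<partial>lborel) \<le> ennreal C0"
  shows "r x \<le> Cup \<gamma> \<alpha> \<rho>b C0 \<and> clow \<gamma> \<theta> \<rho>b C0 \<epsilon> \<le> r x"
proof -
  define a where "a = \<alpha> - 1/2"
  define p where "p = \<theta> - 1/2"
  define A where "A = max C0 0"
  have a0: "a > 0" and p0: "p < 0" using a1 th1 unfolding a_def p_def by auto
  have A0: "A \<ge> 0" unfolding A_def by simp
  have CA: "ennreal C0 \<le> ennreal A" unfolding A_def by (simp add: ennreal_leI)
  define fu' where "fu' y = r y powr (a - 1) * r' y" for y
  define fl' where "fl' y = r y powr (p - 1) * r' y" for y
  have du: "\<And>y. ((\<lambda>y. r y powr a / a) has_real_derivative fu' y) (at y)"
    unfolding fu'_def by (rule powr_der[OF pos d]) (use a0 in simp)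
  have dl: "\<And>y. ((\<lambda>y. r y powr p / p) has_real_derivative fl' y) (at y)"
    unfolding fl'_def by (rule powr_der[OF pos d]) (use p0 in simp)
  have cu: "continuous_on UNIV fu'" unfolding fu'_def by (rule powr_der_cont[OF pos d c])
  have cl: "continuous_on UNIV fl'" unfolding fl'_def by (rule powr_der_cont[OF pos d c])
  have deru: "deriv (\<lambda>y. r y powr (\<alpha> - 1/2) / (\<alpha> - 1/2)) y = fu' y" for y
    using DERIV_imp_deriv[OF du] unfolding a_def by simp
  have derl: "deriv (\<lambda>y. r y powr (\<theta> - 1/2) / (\<theta> - 1/2)) y = fl' y" for y
    using DERIV_imp_deriv[OF dl] unfolding p_def by simp
  define E where "E x = W x + (fu' x)\<^sup>2 + \<epsilon>\<^sup>2 * (fl' x)\<^sup>2 + r x * Psi \<gamma> (r x) \<rho>b" for x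
  have Pn: "\<And>y. Psi \<gamma> (r y) \<rho>b \<ge> 0" using Psi_nonneg pos rb g1 by simp
  have Pn2: "\<And>y. r y * Psi \<gamma> (r y) \<rho>b \<ge> 0" using Pn pos by (simp add: less_imp_le)
  have estE: "(\<integral>\<^sup>+x. ennreal (E x) \<partial>lborel) \<le> ennreal A"
    using est CA unfolding E_def deru derl by (rule order.trans)
  have compE: "(\<integral>\<^sup>+x. ennreal (g x) \<partial>lborel) \<le> ennreal A" if "\<And>x. g x \<le> E x" for g
    by (rule order.trans[OF nn_integral_mono estE]) (use that in \<open>auto intro: ennreal_leI\<close>)
  have IU: "(\<integral>\<^sup>+x. ennreal ((fu' x)\<^sup>2) \<partial>lborel) \<le> ennreal A"
    by (rule compE) (use W0 Pn2 in \<open>auto simp: E_def\<close>)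
  have IL: "(\<integral>\<^sup>+x. ennreal ((- (\<epsilon> * fl' x))\<^sup>2) \<partial>lborel) \<le> ennreal A"
    by (rule compE) (use W0 Pn2 in \<open>auto simp: E_def power_mult_distrib\<close>)
  have IH: "(\<integral>\<^sup>+x. ennreal (r x * Psi \<gamma> (r x) \<rho>b) \<partial>lborel) \<le> ennreal A"
    by (rule compE) (use W0 in \<open>auto simp: E_def\<close>)
  define mU where "mU = 3*\<rho>b * (\<rho>b * ((2*\<rho>b) powr \<gamma> - \<rho>b powr \<gamma>) / (9*\<rho>b\<^sup>2))"
  have mU0: "mU > 0"
  proof -
    have "\<rho>b powr \<gamma> < (2*\<rho>b) powr \<gamma>" using rb g1 by (intro powr_less_mono2) auto
    then show ?thesis unfolding mU_def using rb by (intro mult_pos_pos divide_pos_pos) auto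
  qed
  have thrU: "mU \<le> r y * Psi \<gamma> (r y) \<rho>b" if "r y powr a / a > (3*\<rho>b) powr a / a" for y
  proof -
    have "r y > 3*\<rho>b"
    proof (rule ccontr)
      assume "\<not> ?thesis"
      then have "r y powr a \<le> (3*\<rho>b) powr a" using pos a0 by (intro powr_mono2) (auto simp: less_imp_le)
      then have "r y powr a / a \<le> (3*\<rho>b) powr a / a" using a0 by (intro divide_right_mono) auto
      then show False using that by linarith
    qed
    moreover have "Psi \<gamma> (r y) \<rho>b \<ge> \<rho>b * ((2*\<rho>b) powr \<gamma> - \<rho>b powr \<gamma>) / (9 * \<rho>b\<^sup>2)"
      using Psi_big[of \<rho>b \<gamma> "r y"] rb g1 calculation by simp
    moreover have "0 \<le> \<rho>b * ((2*\<rho>b) powr \<gamma> - \<rho>b powr \<gamma>) / (9 * \<rho>b\<^sup>2)"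
      using rb g1 by (intro divide_nonneg_pos mult_nonneg_nonneg) (auto intro!: powr_mono2)
    ultimately show ?thesis unfolding mU_def using rb by (intro mult_mono) auto
  qed
  have KU: "r x powr a / a \<le> (3*\<rho>b) powr a / a + (A + (A/mU+1))/2"
    by (rule key[OF du cu IU IH A0 mU0 thrU])
  then have "a * (r x powr a / a) \<le> a * ((3*\<rho>b) powr a / a + (A + (A/mU+1))/2)"
    using a0 by (intro mult_left_mono) auto
  then have "r x powr a \<le> a * ((3*\<rho>b) powr a / a + (A + (A/mU+1))/2)"
    using a0 by simp
  then have "(r x powr a) powr (1/a) \<le> (a * ((3*\<rho>b) powr a / a + (A + (A/mU+1))/2)) powr (1/a)"
    using a0 pos by (intro powr_mono2) auto
  then have UP: "r x \<le> Cup \<gamma> \<alpha> \<rho>b C0"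
    using a0 pos[of x] unfolding Cup_def Let_def a_def[symmetric] A_def[symmetric] mU_def[symmetric]
    by (simp add: powr_powr less_imp_le)
  define mL where "mL = (\<rho>b powr \<gamma> - (\<rho>b/2) powr \<gamma>)/2"
  have mL0: "mL > 0"
  proof -
    have "(\<rho>b/2) powr \<gamma> < \<rho>b powr \<gamma>" using rb g1 by (intro powr_less_mono2) auto
    then show ?thesis unfolding mL_def by simp
  qed
  define cL where "cL = - (\<epsilon> * ((\<rho>b/4) powr p / p))"
  have dl2: "\<And>y. ((\<lambda>y. - (\<epsilon> * (r y powr p / p))) has_real_derivative - (\<epsilon> * fl' y)) (at y)"
    by (intro derivative_intros DERIV_cmult dl)
  have cl2: "continuous_on UNIV (\<lambda>y. - (\<epsilon> * fl' y))" by (intro continuous_intros cl)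
  have fsimp: "- (\<epsilon> * (z / p)) = \<epsilon> * z / (-p)" for z using p0 by (simp add: field_simps)
  have thrL: "mL \<le> r y * Psi \<gamma> (r y) \<rho>b" if "- (\<epsilon> * (r y powr p / p)) > cL" for y
  proof -
    have "r y \<le> \<rho>b/4"
    proof (rule ccontr)
      assume "\<not> ?thesis"
      then have "r y powr p \<le> (\<rho>b/4) powr p" using rb p0 by (intro powr_mono2') auto
      then have "\<epsilon> * r y powr p / (-p) \<le> \<epsilon> * (\<rho>b/4) powr p / (-p)"
        using p0 e0 by (intro divide_right_mono mult_left_mono) auto
      then show False using that unfolding cL_def fsimp by simp
    qed
    then show ?thesis using Psi_small[of \<rho>b \<gamma> "r y"] rb g1 pos unfolding mL_def by simp
  qed
  have KL: "- (\<epsilon> * (r x powr p / p)) \<le> cL + (A + (A/mL+1))/2"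
    by (rule key[OF dl2 cl2 IL IH A0 mL0 thrL])
  define KL where "KL = cL + (A + (A/mL+1))/2"
  have cL0: "cL > 0" unfolding cL_def fsimp using e0 p0 rb by (intro divide_pos_pos mult_pos_pos) auto
  have KL0: "KL > 0" unfolding KL_def using cL0 A0 mL0 by (smt (verit) divide_nonneg_pos)
  have "\<epsilon> * r x powr p / (-p) \<le> KL" using KL unfolding KL_def fsimp .
  then have "r x powr p \<le> (-p) * KL / \<epsilon>" using e0 p0 by (simp add: field_simps)
  moreover have "r x powr p > 0" using pos[of x] by simp
  ultimately have "((-p) * KL / \<epsilon>) powr (1/p) \<le> (r x powr p) powr (1/p)"
    using p0 by (intro powr_mono2') auto
  then have LO: "clow \<gamma> \<theta> \<rho>b C0 \<epsilon> \<le> r x"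
    using p0 pos[of x] unfolding clow_def Let_def p_def[symmetric] A_def[symmetric] mL_def[symmetric]
      cL_def[symmetric] KL_def[symmetric]
    by (simp add: powr_powr less_imp_le)
  show ?thesis using UP LO by simp
qed



lemma clow_pos:
  assumes g1: "\<gamma> > 1" and th1: "\<theta> < 1/2" and rb: "\<rho>b > 0" and e0: "\<epsilon> > 0"
  shows "clow \<gamma> \<theta> \<rho>b C0 \<epsilon> > 0"
proof -
  define p where "p = \<theta> - 1/2"
  define A where "A = max C0 0"
  define mL where "mL = (\<rho>b powr \<gamma> - (\<rho>b/2) powr \<gamma>)/2"
  have p0: "p < 0" using th1 unfolding p_def by simp
  have A0: "A \<ge> 0" unfolding A_def by simp
  have mL0: "mL > 0"
  proof -
    have "(\<rho>b/2) powr \<gamma> < \<rho>b powr \<gamma>" using rb g1 by (intro powr_less_mono2) auto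
    then show ?thesis unfolding mL_def by simp
  qed
  define cL where "cL = - (\<epsilon> * ((\<rho>b/4) powr p / p))"
  have cL0: "cL > 0" unfolding cL_def using e0 p0 rb
    by (simp add: mult_pos_neg divide_pos_neg)
  define KL where "KL = cL + (A + (A/mL+1))/2"
  have KL0: "KL > 0" unfolding KL_def using cL0 A0 mL0 by (smt (verit) divide_nonneg_pos)
  have "(-p) * KL / \<epsilon> \<noteq> 0" using KL0 p0 e0 by simp
  then show ?thesis unfolding clow_def Let_def p_def[symmetric] A_def[symmetric] mL_def[symmetric]
      cL_def[symmetric] KL_def[symmetric] by simp
qed

theorem lemma3p4:
  fixes \<gamma> \<alpha> \<theta> \<rho>b C0 :: real
  assumes "\<gamma> > 1" and "\<alpha> > 1/2" and "0 < \<theta>" and "\<theta> < 1/2" and "\<rho>b > 0"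
  shows "\<exists>C. \<forall>\<epsilon> T \<rho> u. \<epsilon> > 0 \<and> T > 0
            \<and> smooth_on (UNIV \<times> {0..T}) \<rho> \<and> smooth_on (UNIV \<times> {0..T}) u
            \<and> (\<forall>x. \<forall>t\<in>{0..T}. \<rho> x t > 0)
            \<and> solves_system \<gamma> \<alpha> \<theta> \<epsilon> T \<rho> u
            \<and> lemma33_estimate \<gamma> \<alpha> \<theta> \<rho>b C0 \<epsilon> T \<rho> u
          \<longrightarrow> (\<exists>c>0. \<forall>x. \<forall>t\<in>{0..T}. c \<le> \<rho> x t \<and> \<rho> x t \<le> C)"
proof (rule exI[of _ "Cup \<gamma> \<alpha> \<rho>b C0"], intro allI impI)
  fix \<epsilon> T \<rho> u
  assume H: "\<epsilon> > 0 \<and> T > 0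
            \<and> smooth_on (UNIV \<times> {0..T}) \<rho> \<and> smooth_on (UNIV \<times> {0..T}) u
            \<and> (\<forall>x. \<forall>t\<in>{0..T}. \<rho> x t > 0)
            \<and> solves_system \<gamma> \<alpha> \<theta> \<epsilon> T \<rho> u
            \<and> lemma33_estimate \<gamma> \<alpha> \<theta> \<rho>b C0 \<epsilon> T \<rho> u"
  then have e0: "\<epsilon> > 0" and sm: "smooth_on (UNIV \<times> {0..T}) \<rho>"
    and pos: "\<forall>x. \<forall>t\<in>{0..T}. \<rho> x t > 0" and est: "lemma33_estimate \<gamma> \<alpha> \<theta> \<rho>b C0 \<epsilon> T \<rho> u" by auto
  show "\<exists>c>0. \<forall>x. \<forall>t\<in>{0..T}. c \<le> \<rho> x t \<and> \<rho> x t \<le> Cup \<gamma> \<alpha> \<rho>b C0"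
  proof (intro exI conjI allI ballI)
    show "clow \<gamma> \<theta> \<rho>b C0 \<epsilon> > 0" using clow_pos assms e0 by simp
    fix x t assume t: "t \<in> {0..T}"
    obtain r' where d: "\<forall>y. ((\<lambda>y. \<rho> y t) has_real_derivative r' y) (at y)" and c: "continuous_on UNIV r'"
      using smooth_slice[OF sm t] by blast
    have E: "(\<integral>\<^sup>+x. ennreal (\<rho> x t * (u x t)\<^sup>2 + (deriv (\<lambda>y. \<rho> y t powr (\<alpha> - 1/2) / (\<alpha> - 1/2)) x)\<^sup>2
         + \<epsilon>\<^sup>2 * (deriv (\<lambda>y. \<rho> y t powr (\<theta> - 1/2) / (\<theta> - 1/2)) x)\<^sup>2
         + \<rho> x t * Psi \<gamma> (\<rho> x t) \<rho>b) \<partial>lborel) \<le> ennreal C0"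
      using est t unfolding lemma33_estimate_def dx_def by blast
    have W0: "\<And>x. 0 \<le> \<rho> x t * (u x t)\<^sup>2"
    proof -
      fix x have "0 < \<rho> x t" using pos t by blast
      then show "0 \<le> \<rho> x t * (u x t)\<^sup>2" by simp
    qed
    have "\<rho> x t \<le> Cup \<gamma> \<alpha> \<rho>b C0 \<and> clow \<gamma> \<theta> \<rho>b C0 \<epsilon> \<le> \<rho> x t"
      apply (rule slice_bounds[of \<gamma> \<alpha> \<theta> \<rho>b \<epsilon> "\<lambda>y. \<rho> y t" r' "\<lambda>x. \<rho> x t * (u x t)\<^sup>2"])
      using assms e0 pos t d c E W0 by auto
    then show "clow \<gamma> \<theta> \<rho>b C0 \<epsilon> \<le> \<rho> x t" "\<rho> x t \<le> Cup \<gamma> \<alpha> \<rho>b C0" by auto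
  qed
qed

end
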